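(* Suppose that $f$ is continuously differentiable with $\nabla f$ Lipschitz continuous with constant $L_{\nabla f}$. Then, for every iteration $k$ of CLARSTA, the model $\widehat m_k$ belongs to a class of $(\mathcal{C},\boldsymbol{Q}_k)$-fully linear models of $f$ at $\boldsymbol{x}_k$ parameterized by $\Delta_k\in(0,\Delta_{\max}]$, with constants $$\kappa_{ef}=\left(\tfrac12L_{\nabla f}\left(1+\sqrt{p}M_{\widehat{\boldsymbol{R}}^{-1}}\right)\right)\epsilon_{\mathrm{rad}}^2,\qquad\kappa_{eg}=\left(\tfrac12L_{\nabla f}\left(2+\sqrt{p}M_{\widehat{\boldsymbol{R}}^{-1}}\right)\right)\epsilon_{\mathrm{rad}},$$ where $M_{\widehat{\boldsymbol{R}}^{-1}}=\max\{1/\epsilon_{\mathrm{geo}},1/\Delta_{\min}\}\epsilon_{\mathrm{rad}}\Delta_{\max}$; that is, for all $\widehat{\boldsymbol{s}}\in\boldsymbol{Q}_k^\top(\mathcal{C}-\boldsymbol{x}_k)$ with $\|\widehat{\boldsymbol{s}}\|\le\Delta_k$, $|f(\boldsymbol{x}_k+\boldsymbol{Q}_k\widehat{\boldsymbol{s}})-\widehat m_k(\widehat{\boldsymbol{s}})|\le\kappa_{ef}\Delta_k^2$ and $\max_{\boldsymbol{d}\in\boldsymbol{Q}_k^\top(\mathcal{C}-\boldsymbol{x}_k),\|\boldsymbol{d}\|\le1}|(\boldsymbol{Q}_k^\top\nabla f(\boldsymbol{x}_k+\boldsymbol{Q}_k\widehat{\boldsymbol{s}})-\nabla\widehat m_k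(\widehat{\boldsymbol{s}}))^\top\boldsymbol{d}|\le\kappa_{eg}\Delta_k$.
   Context: Problem: minimize $f:\mathbb{R}^n\to\mathbb{R}$ over $\mathcal{C}\subseteq\mathbb{R}^n$, closed convex with nonempty interior. $\|\cdot\|$ Euclidean/spectral norm; $\mathrm{proj}_{\mathcal{C}}$ Euclidean projection; $\sigma_{\min}$ smallest singular value. QR-factorizations $\boldsymbol{D}=\boldsymbol{Q}\boldsymbol{R}$ of full-column-rank $\boldsymbol{D}\in\mathbb{R}^{n\times p}$ have $\boldsymbol{Q}$ with orthonormal columns and invertible $\boldsymbol{R}$. $\boldsymbol{Q}^\top(\mathcal{C}-\boldsymbol{x})=\{\boldsymbol{Q}^\top(\boldsymbol{z}-\boldsymbol{x}):\boldsymbol{z}\in\mathcal{C}\}$. Algorithm CLARSTA. Parameters: integers $1\le p_{\mathrm{rand}}\le p\le n$; $\boldsymbol{x}_0\in\mathcal{C}$; $\Delta_0>0$; $0<\Delta_{\min}\le\Delta_{\max}$; $\gamma_{\mathrm{dec}}\in(0,1)$; $\gamma_{\mathrm{inc}}^k\ge1$; $0<\eta_1\le\eta_2<1$; $\mu>0$; $\epsilon_{\mathrm{rad}}\ge1$; $\epsilon_{\mathrm{geo}}>0$. GEN$(q,\Delta,\boldsymbol{Q})$ ($\boldsymbol{Q}$ optional, orthonormal columns): draw $\boldsymbol{A}\in\mathbb{R}^{n\times q}$ with i.i.d. $\mathcal{N}(0,1)$ entries, of full column rank; $\widetilde{\boldsymbol{A}}=\boldsymbol{A}-\boldsymbol{Q}\boldsymbol{Q}^\top\boldsymbol{A}$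 if $\boldsymbol{Q}$ given, else $\boldsymbol{A}$; QR $\widetilde{\boldsymbol{A}}=[\widetilde{\boldsymbol{q}}_1\cdots\widetilde{\boldsymbol{q}}_q]\widetilde{\boldsymbol{R}}$; return $\Delta\widetilde{\boldsymbol{q}}_1,\dots,\Delta\widetilde{\boldsymbol{q}}_q$. REMOVE$(\boldsymbol{D}^U,\Delta,r)$: repeat $r$ times: for $\boldsymbol{D}^U=[\boldsymbol{d}_1\cdots\boldsymbol{d}_m]$ let $\boldsymbol{M}_i$ be $\boldsymbol{D}^U$ without column $i$, $\theta_i=\sigma_{\min}(\boldsymbol{M}_i)\max(\|\boldsymbol{d}_i\|^4/\Delta^4,1)$; delete the column with largest $\theta_i$. Initialization: $\boldsymbol{D}_0$ = columns GEN$(p,\Delta_0)$. Iteration $k$: QR $\boldsymbol{D}_k=[\boldsymbol{d}_1\cdots\boldsymbol{d}_p]=\boldsymbol{Q}_k\boldsymbol{R}_k$, $\boldsymbol{R}_k=[\boldsymbol{r}_1\cdots\boldsymbol{r}_p]$; $\widehat f_k(\widehat{\boldsymbol{s}})=f(\boldsymbol{x}_k+\boldsymbol{Q}_k\widehat{\boldsymbol{s}})$; $\widehat m_k(\widehat{\boldsymbol{s}})=\widehat f_k(\boldsymbol{0}_p)+\boldsymbol{g}_k^\top\widehat{\boldsymbol{s}}$, $\boldsymbol{g}_k=(\boldsymbol{R}_k^\top)^{-1}\boldsymbol{\delta}_k$, $(\boldsymbol{\delta}_k)_i=\widehat f_k(\boldsymbol{r}_i)-\widehat f_k(\boldsymbol{0}_p)$;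 $\pi^m(\boldsymbol{x}_k)=\left|\min_{\boldsymbol{d}\in\boldsymbol{Q}_k^\top(\mathcal{C}-\boldsymbol{x}_k),\|\boldsymbol{d}\|\le1}\nabla\widehat m_k(\boldsymbol{0}_p)^\top\boldsymbol{d}\right|$. If $\Delta_k\le\mu\pi^m(\boldsymbol{x}_k)$: approximately solve $\min\{\widehat m_k(\widehat{\boldsymbol{s}}):\widehat{\boldsymbol{s}}\in\boldsymbol{Q}_k^\top\mathcal{C},\|\widehat{\boldsymbol{s}}\|\le\Delta_k\}$ giving $\widehat{\boldsymbol{s}}_k$; $\boldsymbol{s}_k=\mathrm{proj}_{\mathcal{C}}(\boldsymbol{x}_k+\boldsymbol{Q}_k\widehat{\boldsymbol{s}}_k)-\boldsymbol{x}_k$; $\rho_k=\frac{f(\boldsymbol{x}_k)-f(\boldsymbol{x}_k+\boldsymbol{s}_k)}{\widehat m_k(\boldsymbol{0}_p)-\widehat m_k(\widehat{\boldsymbol{s}}_k)}$; $\Delta_{k+1}=\gamma_{\mathrm{dec}}\Delta_k$ if $\rho_k<\eta_1$, $\min(\gamma^k_{\mathrm{inc}}\Delta_k,\Delta_{\max})$ if $\rho_k>\eta_2$, $\Delta_k$ otherwise; $\boldsymbol{x}_{k+1}$ any point of $\mathcal{C}$ with $f(\boldsymbol{x}_{k+1})\le\min(\{f(\boldsymbol{x}_k+\boldsymbol{s}_k)\}\cup\{f(\boldsymbol{x}_k+\boldsymbol{d}_i+\boldsymbol{d}_j):\boldsymbol{x}_k+\boldsymbol{d}_i+\boldsymbol{d}_j\in\mathcal{C},\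 \boldsymbol{d}_i,\boldsymbol{d}_j\text{ columns of }[\boldsymbol{0}_n\ \boldsymbol{D}_k]\})$; $\boldsymbol{D}^U_{k+1}$: select $p$ linearly independent directions among $\boldsymbol{x}_k+\boldsymbol{s}_k-\boldsymbol{x}_{k+1}$ and $\boldsymbol{x}_k+\boldsymbol{d}_i+\boldsymbol{d}_j-\boldsymbol{x}_{k+1}$, apply REMOVE$(\cdot,\Delta_{k+1},p_{\mathrm{rand}})$, delete columns of norm $>\epsilon_{\mathrm{rad}}\Delta_{k+1}$, while nonempty with $\sigma_{\min}<\epsilon_{\mathrm{geo}}$ apply REMOVE$(\cdot,\Delta_{k+1},1)$, optionally remove more by REMOVE; with $p_1$ remaining columns, $\boldsymbol{D}^R_{k+1}$ = GEN$(p-p_1,\Delta_{k+1},$ orthonormal basis of column space of $\boldsymbol{D}^U_{k+1})$, $\boldsymbol{D}_{k+1}=[\boldsymbol{D}^U_{k+1}\ \boldsymbol{D}^R_{k+1}]$. Otherwise: $\Delta_{k+1}=\gamma_{\mathrm{dec}}\Delta_k$, $\boldsymbol{x}_{k+1}=\boldsymbol{x}_k$, $\boldsymbol{D}_{k+1}=\gamma_{\mathrm{dec}}\boldsymbol{D}_k$. Stop if $\Delta_{k+1}<\Delta_{\min}$. Definition: given $\overline\Delta>0$, $\boldsymbol{x}\in\mathcal{C}$, continuously differentiable $f$ and $\boldsymbol{Q}\in\mathbb{R}^{n\times p}$ with orthonormal columns, a family $\{\widehat m_\Delta\}_{\Delta\in(0,\overline\Delta]}$ of functions $\mathbb{R}^p\to\mathbb{R}$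 is a class of $(\mathcal{C},\boldsymbol{Q})$-fully linear models of $f$ at $\boldsymbol{x}$ parameterized by $\Delta$ if there are $\kappa_{ef},\kappa_{eg}>0$ with, for all $\Delta\in(0,\overline\Delta]$ and $\widehat{\boldsymbol{s}}\in\boldsymbol{Q}^\top(\mathcal{C}-\boldsymbol{x})$, $\|\widehat{\boldsymbol{s}}\|\le\Delta$: $|f(\boldsymbol{x}+\boldsymbol{Q}\widehat{\boldsymbol{s}})-\widehat m_\Delta(\widehat{\boldsymbol{s}})|\le\kappa_{ef}\Delta^2$ and $\max_{\boldsymbol{d}\in\boldsymbol{Q}^\top(\mathcal{C}-\boldsymbol{x}),\|\boldsymbol{d}\|\le1}|(\boldsymbol{Q}^\top\nabla f(\boldsymbol{x}+\boldsymbol{Q}\widehat{\boldsymbol{s}})-\nabla\widehat m_\Delta(\widehat{\boldsymbol{s}}))^\top\boldsymbol{d}|\le\kappa_{eg}\Delta$. *)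

theory Defs
  imports "HOL-Analysis.Analysis"
begin

(* ---------- finite families of vectors (lists = n x q matrices given by columns) ---------- *)

definition lin_indep_list :: "('a::real_vector) list \<Rightarrow> bool" where
  "lin_indep_list vs \<longleftrightarrow>
     (\<forall>c::nat \<Rightarrow> real. (\<Sum>i<length vs. c i *\<^sub>R vs ! i) = 0 \<longrightarrow> (\<forall>i<length vs. c i = 0))"

definition orthonormal_list :: "('a::real_inner) list \<Rightarrow> bool" where
  "orthonormal_list vs \<longleftrightarrow>
     (\<forall>i<length vs. \<forall>j<length vs. inner (vs ! i) (vs ! j) = (if i = j then 1 else 0))"

definition sq_invertible :: "nat \<Rightarrow> (nat \<Rightarrow> nat \<Rightarrow> real) \<Rightarrow> bool" where
  "sq_invertible q R \<longleftrightarrow> (\<exists>Ri. \<forall>i<q. \<forall>j<q.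
      (\<Sum>l<q. R i l * Ri l j) = (if i = j then 1 else 0) \<and>
      (\<Sum>l<q. Ri i l * R l j) = (if i = j then 1 else 0))"

definition sigma_min :: "('a::real_normed_vector) list \<Rightarrow> real" where
  "sigma_min vs = Inf {norm (\<Sum>i<length vs. c i *\<^sub>R vs ! i) | c::nat \<Rightarrow> real.
                        (\<Sum>i<length vs. (c i)\<^sup>2) = 1}"

(* ---------- GEN(q, Delta, Q):  U = list of orthonormal columns of Q ([] if Q not given) ---------- *)

definition gen :: "nat \<Rightarrow> real \<Rightarrow> ('a::euclidean_space) list \<Rightarrow> 'a list \<Rightarrow> bool" where
  "gen q \<Delta> U out \<longleftrightarrow> (\<exists>A Qt Rt.
      length A = q \<and> lin_indep_list A \<and>
      length Qt = q \<and> orthonormal_list Qt \<and> sq_invertible q Rt \<and>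
      (\<forall>j<q. A ! j - (\<Sum>u\<leftarrow>U. inner u (A ! j) *\<^sub>R u) = (\<Sum>i<q. Rt i j *\<^sub>R Qt ! i)) \<and>
      out = map (\<lambda>v. \<Delta> *\<^sub>R v) Qt)"

definition del_nth :: "nat \<Rightarrow> 'a list \<Rightarrow> 'a list" where
  "del_nth i vs = take i vs @ drop (Suc i) vs"

definition remove_theta :: "real \<Rightarrow> ('a::real_normed_vector) list \<Rightarrow> nat \<Rightarrow> real" where
  "remove_theta \<Delta> vs i = sigma_min (del_nth i vs) * max (norm (vs ! i) ^ 4 / \<Delta> ^ 4) 1"

(* one deletion step of REMOVE (any maximiser of theta may be deleted; no-op on the empty list) *)
definition remove_one :: "real \<Rightarrow> ('a::real_normed_vector) list \<Rightarrow> 'a list \<Rightarrow> bool" where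
  "remove_one \<Delta> vs vs' \<longleftrightarrow>
     (vs = [] \<and> vs' = []) \<or>
     (\<exists>i<length vs. (\<forall>j<length vs. remove_theta \<Delta> vs j \<le> remove_theta \<Delta> vs i) \<and>
                     vs' = del_nth i vs)"

definition remove_rel :: "real \<Rightarrow> nat \<Rightarrow> ('a::real_normed_vector) list \<Rightarrow> 'a list \<Rightarrow> bool" where
  "remove_rel \<Delta> r vs vs' \<longleftrightarrow> (\<exists>sq::nat \<Rightarrow> 'a list. sq 0 = vs \<and> sq r = vs' \<and>
      (\<forall>t<r. remove_one \<Delta> (sq t) (sq (Suc t))))"

definition remove_while :: "real \<Rightarrow> real \<Rightarrow> ('a::real_normed_vector) list \<Rightarrow> 'a list \<Rightarrow> bool" where
  "remove_while \<epsilon>geo \<Delta> vs vs' \<longleftrightarrow> (\<exists>(sq::nat \<Rightarrow> 'a list) m. sq 0 = vs \<and> sq m = vs' \<and>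
      (\<forall>t<m. sq t \<noteq> [] \<and> sigma_min (sq t) < \<epsilon>geo \<and> remove_one \<Delta> (sq t) (sq (Suc t))) \<and>
      (vs' = [] \<or> \<epsilon>geo \<le> sigma_min vs'))"

(* ---------- matrices with p columns (p = CARD('p)) ---------- *)

definition cols_are :: "real^'p^'n \<Rightarrow> (real^'n) list \<Rightarrow> bool" where
  "cols_are D cs \<longleftrightarrow> (\<exists>e::'p \<Rightarrow> nat. bij_betw e UNIV {..<length cs} \<and>
                         (\<forall>j. column j D = cs ! e j))"

definition is_QR :: "real^'p^'n \<Rightarrow> real^'p^'n \<Rightarrow> real^'p^'p \<Rightarrow> bool" where
  "is_QR D Q R \<longleftrightarrow> D = Q ** R \<and> transpose Q ** Q = mat 1 \<and> invertible R"

definition proj_set :: "real^'p^'n \<Rightarrow> (real^'n) set \<Rightarrow> real^'n \<Rightarrow> (real^'p) set" where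
  "proj_set Q C x = {transpose Q *v (z - x) | z. z \<in> C}"

definition model_delta :: "(real^'n \<Rightarrow> real) \<Rightarrow> real^'n \<Rightarrow> real^'p^'n \<Rightarrow> real^'p^'p \<Rightarrow> real^'p" where
  "model_delta f x Q R = (\<chi> i. f (x + Q *v column i R) - f x)"

definition model_grad :: "(real^'n \<Rightarrow> real) \<Rightarrow> real^'n \<Rightarrow> real^'p^'n \<Rightarrow> real^'p^'p \<Rightarrow> real^'p" where
  "model_grad f x Q R = matrix_inv (transpose R) *v model_delta f x Q R"

(* \<hat>m_k(\<hat>s) = \<hat>f_k(0) + g_k^T \<hat>s ; its gradient is the constant g_k *)
definition model :: "(real^'n \<Rightarrow> real) \<Rightarrow> real^'n \<Rightarrow> real^'p^'n \<Rightarrow> real^'p^'p \<Rightarrow> real^'p \<Rightarrow> real" where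
  "model f x Q R s = f (x + Q *v 0) + inner (model_grad f x Q R) s"

definition crit_meas :: "(real^'n \<Rightarrow> real) \<Rightarrow> (real^'n) set \<Rightarrow> real^'n \<Rightarrow> real^'p^'n \<Rightarrow> real^'p^'p \<Rightarrow> real" where
  "crit_meas f C x Q R = \<bar>Inf {inner (model_grad f x Q R) d | d. d \<in> proj_set Q C x \<and> norm d \<le> 1}\<bar>"

definition clarsta_step ::
  "(real^'n \<Rightarrow> real) \<Rightarrow> (real^'n) set \<Rightarrow> nat \<Rightarrow> real \<Rightarrow> real \<Rightarrow> (nat \<Rightarrow> real) \<Rightarrow>
   real \<Rightarrow> real \<Rightarrow> real \<Rightarrow> real \<Rightarrow> real \<Rightarrow> real \<Rightarrow> nat \<Rightarrow>
   real^'n \<Rightarrow> real \<Rightarrow> real^'p^'n \<Rightarrow> real^'n \<Rightarrow> real \<Rightarrow> real^'p^'n \<Rightarrow> bool" where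
  "clarsta_step f C prand \<Delta>max \<gamma>dec \<gamma>inc \<eta>1 \<eta>2 \<mu> \<epsilon>rad \<epsilon>geo \<Delta>min k x \<Delta> D x' \<Delta>' D' \<longleftrightarrow>
    (\<exists>Q R. is_QR D Q R \<and>
      (if \<Delta> \<le> \<mu> * crit_meas f C x Q R then
        (\<exists>sh::real^'p. norm sh \<le> \<Delta> \<and>
          (let s = closest_point C (x + Q *v sh) - x;
               \<rho> = (f x - f (x + s)) / (model f x Q R 0 - model f x Q R sh);
               dirs = insert 0 (range (\<lambda>i. column i D));
               trial = {x + a + b | a b. a \<in> dirs \<and> b \<in> dirs \<and> x + a + b \<in> C}
           in \<Delta>' = (if \<rho> < \<eta>1 then \<gamma>dec * \<Delta>
                    else if \<rho> > \<eta>2 then min (\<gamma>inc k * \<Delta>) \<Delta>max else \<Delta>) \<and>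
              x' \<in> C \<and> f x' \<le> f (x + s) \<and> (\<forall>y\<in>trial. f x' \<le> f y) \<and>
              (\<exists>DU0 DU1 DU2 DU3 U DR.
                 length DU0 \<le> CARD('p) \<and> lin_indep_list DU0 \<and>
                 set DU0 \<subseteq> (\<lambda>y. y - x') ` (insert (x + s) trial) \<and>
                 remove_rel \<Delta>' prand DU0 DU1 \<and>
                 remove_while \<epsilon>geo \<Delta>' (filter (\<lambda>d. norm d \<le> \<epsilon>rad * \<Delta>') DU1) DU2 \<and>
                 (\<exists>r. remove_rel \<Delta>' r DU2 DU3) \<and>
                 orthonormal_list U \<and> span (set U) = span (set DU3) \<and>
                 gen (CARD('p) - length DU3) \<Delta>' U DR \<and>
                 cols_are D' (DU3 @ DR))))
      else \<Delta>' = \<gamma>dec * \<Delta> \<and> x' = x \<and> D' = \<gamma>dec *\<^sub>R D)) \<and>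
    \<Delta>min \<le> \<Delta>'"

(* reachable iterations: (k, x_k, Delta_k, D_k) is an iteration of some run of CLARSTA
   (all random draws / approximate solutions / free choices taken arbitrarily) *)
inductive clarsta_iter ::
  "(real^'n \<Rightarrow> real) \<Rightarrow> (real^'n) set \<Rightarrow> nat \<Rightarrow> real^'n \<Rightarrow> real \<Rightarrow> real \<Rightarrow> real \<Rightarrow> real \<Rightarrow>
   (nat \<Rightarrow> real) \<Rightarrow> real \<Rightarrow> real \<Rightarrow> real \<Rightarrow> real \<Rightarrow> real \<Rightarrow>
   nat \<Rightarrow> real^'n \<Rightarrow> real \<Rightarrow> real^'p^'n \<Rightarrow> bool"
  for f C prand x0 \<Delta>0 \<Delta>min \<Delta>max \<gamma>dec \<gamma>inc \<eta>1 \<eta>2 \<mu> \<epsilon>rad \<epsilon>geo where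
  init: "gen CARD('p) \<Delta>0 [] cs \<Longrightarrow> cols_are D0 cs \<Longrightarrow>
         clarsta_iter f C prand x0 \<Delta>0 \<Delta>min \<Delta>max \<gamma>dec \<gamma>inc \<eta>1 \<eta>2 \<mu> \<epsilon>rad \<epsilon>geo 0 x0 \<Delta>0 D0"
| step: "clarsta_iter f C prand x0 \<Delta>0 \<Delta>min \<Delta>max \<gamma>dec \<gamma>inc \<eta>1 \<eta>2 \<mu> \<epsilon>rad \<epsilon>geo k x \<Delta> D \<Longrightarrow>
         clarsta_step f C prand \<Delta>max \<gamma>dec \<gamma>inc \<eta>1 \<eta>2 \<mu> \<epsilon>rad \<epsilon>geo \<Delta>min k x \<Delta> D x' \<Delta>' D' \<Longrightarrow>
         clarsta_iter f C prand x0 \<Delta>0 \<Delta>min \<Delta>max \<gamma>dec \<gamma>inc \<eta>1 \<eta>2 \<mu> \<epsilon>rad \<epsilon>geo (Suc k) x' \<Delta>' D'"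

end

theory Submission
  imports Defs
begin

lemma sum_skip:
  fixes G :: "nat \<Rightarrow> 'b::comm_monoid_add"
  assumes "i < n" "G i = 0"
  shows "(\<Sum>j<n. G j) = (\<Sum>j<n-1. G (if j<i then j else Suc j))"
proof -
  let ?h = "\<lambda>j::nat. if j<i then j else Suc j"
  have "inj_on ?h {..<n-1}" by (auto simp: inj_on_def split: if_splits)
  moreover have "?h ` {..<n-1} = {..<n} - {i}"
  proof
    show "?h ` {..<n-1} \<subseteq> {..<n} - {i}" using assms by auto
    show "{..<n} - {i} \<subseteq> ?h ` {..<n-1}"
    proof
      fix y assume y: "y \<in> {..<n} - {i}"
      show "y \<in> ?h ` {..<n-1}"
      proof (cases "y < i")
        case True then show ?thesis using y assms by (auto intro!: image_eqI[of _ _ y])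
      next
        case False then show ?thesis using y assms by (auto intro!: image_eqI[of _ _ "y - 1"])
      qed
    qed
  qed
  ultimately have bij: "bij_betw ?h {..<n-1} ({..<n} - {i})" by (simp add: bij_betw_def)
  have "(\<Sum>j<n-1. G (?h j)) = (\<Sum>j\<in>{..<n}-{i}. G j)" by (rule sum.reindex_bij_betw[OF bij])
  also have "\<dots> = (\<Sum>j<n. G j)" using sum.remove[of "{..<n}" i G] assms by simp
  finally show ?thesis by simp
qed

lemma del_nth_length: "i < length vs \<Longrightarrow> length (del_nth i vs) = length vs - 1"
  by (simp add: del_nth_def)

lemma del_nth_nth: "i < length vs \<Longrightarrow> j < length vs - 1 \<Longrightarrow>
   del_nth i vs ! j = vs ! (if j < i then j else Suc j)"
  by (auto simp: del_nth_def nth_append min_def)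

lemma del_nth_set: "set (del_nth i vs) \<subseteq> set vs"
  unfolding del_nth_def using set_take_subset set_drop_subset by fastforce

definition lbnd :: "real \<Rightarrow> ('a::real_normed_vector) list \<Rightarrow> bool" where
  "lbnd s vs \<longleftrightarrow> (\<forall>c. s * sqrt (\<Sum>i<length vs. (c i)\<^sup>2) \<le> norm (\<Sum>i<length vs. c i *\<^sub>R vs ! i))"

lemma lbnd_del:
  assumes "lbnd s vs" "i < length vs"
  shows "lbnd s (del_nth i vs)"
  unfolding lbnd_def
proof
  fix c :: "nat \<Rightarrow> real"
  define c' where "c' j = (if j < i then c j else if j = i then 0 else c (j - 1))" for j
  have e: "c' (if j < i then j else Suc j) = c j" for j by (simp add: c'_def)
  let ?n = "length vs"
  have ci: "c' i = 0" by (simp add: c'_def)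
  have s1: "(\<Sum>j<?n. (c' j)\<^sup>2) = (\<Sum>j<?n-1. (c j)\<^sup>2)"
    using sum_skip[of i ?n "\<lambda>j. (c' j)\<^sup>2"] assms(2) ci by (simp only: e) simp
  have s2: "(\<Sum>j<?n. c' j *\<^sub>R vs ! j) = (\<Sum>j<?n-1. c j *\<^sub>R del_nth i vs ! j)"
    using sum_skip[of i ?n "\<lambda>j. c' j *\<^sub>R vs ! j"] assms(2)
    using ci by (simp add: e del_nth_nth)
  show "s * sqrt (\<Sum>j<length (del_nth i vs). (c j)\<^sup>2) \<le> norm (\<Sum>j<length (del_nth i vs). c j *\<^sub>R del_nth i vs ! j)"
    using assms(1)[unfolded lbnd_def, rule_format, of c'] s1 s2 assms(2) by (simp add: del_nth_length)
qed

lemma remove_one_props: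
  assumes "remove_one \<Delta> vs vs'"
  shows "set vs' \<subseteq> set vs \<and> (lbnd s vs \<longrightarrow> lbnd s vs')"
proof -
  have "(vs = [] \<and> vs' = []) \<or> (\<exists>i<length vs. vs' = del_nth i vs)"
    using assms unfolding remove_one_def by blast
  then show ?thesis
  proof
    assume "vs = [] \<and> vs' = []" then show ?thesis by simp
  next
    assume "\<exists>i<length vs. vs' = del_nth i vs"
    then obtain i where "i < length vs" "vs' = del_nth i vs" by blast
    then show ?thesis using del_nth_set lbnd_del by metis
  qed
qed

lemma remove_rel_props:
  assumes "remove_rel \<Delta> r vs vs'"
  shows "set vs' \<subseteq> set vs \<and> (lbnd s vs \<longrightarrow> lbnd s vs')"
proof -
  obtain sq where sq: "sq 0 = vs" "sq r = vs'" "\<forall>t<r. remove_one \<Delta> (sq t) (sq (Suc t))"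
    using assms unfolding remove_rel_def by blast
  have "t \<le> r \<Longrightarrow> set (sq t) \<subseteq> set vs \<and> (lbnd s vs \<longrightarrow> lbnd s (sq t))" for t
  proof (induction t)
    case 0 then show ?case using sq by simp
  next
    case (Suc t)
    then have "remove_one \<Delta> (sq t) (sq (Suc t))" using sq by simp
    then show ?case using Suc remove_one_props[of \<Delta> "sq t" "sq (Suc t)" s] by auto
  qed
  then show ?thesis using sq by auto
qed

lemma remove_while_props:
  assumes "remove_while e \<Delta> vs vs'"
  shows "set vs' \<subseteq> set vs \<and> (vs' = [] \<or> e \<le> sigma_min vs')"
proof -
  obtain sq m where sq: "sq 0 = vs" "sq m = vs'"
    "\<forall>t<m. remove_one \<Delta> (sq t) (sq (Suc t))" "vs' = [] \<or> e \<le> sigma_min vs'"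
    using assms unfolding remove_while_def by blast
  have "t \<le> m \<Longrightarrow> set (sq t) \<subseteq> set vs" for t
  proof (induction t)
    case 0 then show ?case using sq by simp
  next
    case (Suc t)
    then have "remove_one \<Delta> (sq t) (sq (Suc t))" using sq by simp
    then show ?case using Suc remove_one_props[of \<Delta> "sq t" "sq (Suc t)"] by auto
  qed
  then show ?thesis using sq by auto
qed

lemma lbnd_Nil: "s * 0 \<le> 0 \<Longrightarrow> lbnd s []" by (simp add: lbnd_def)

lemma lbnd_sigma:
  assumes "vs \<noteq> []" "s \<le> sigma_min vs"
  shows "lbnd s vs"
  unfolding lbnd_def
proof
  fix c :: "nat \<Rightarrow> real"
  let ?n = "length vs"
  define S where "S = (\<Sum>i<?n. (c i)\<^sup>2)"
  let ?X = "{norm (\<Sum>i<length vs. c i *\<^sub>R vs ! i) | c::nat \<Rightarrow> real. (\<Sum>i<length vs. (c i)\<^sup>2) = 1}"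
  have bdd: "bdd_below ?X" by (rule bdd_belowI[of _ 0]) auto
  show "s * sqrt S \<le> norm (\<Sum>i<?n. c i *\<^sub>R vs ! i)"
  proof (cases "S = 0")
    case True
    then have "\<forall>i\<in>{..<?n}. (c i)\<^sup>2 = 0" unfolding S_def by (subst sum_nonneg_eq_0_iff[symmetric]) auto
    then show ?thesis using True by simp
  next
    case False
    then have Sp: "S > 0" unfolding S_def by (metis sum_nonneg zero_le_power2 less_eq_real_def)
    define c' where "c' i = c i / sqrt S" for i
    have "(\<Sum>i<?n. (c' i)\<^sup>2) = (\<Sum>i<?n. (c i)\<^sup>2) / S"
      unfolding c'_def using Sp by (simp add: power_divide sum_divide_distrib)
    then have "(\<Sum>i<?n. (c' i)\<^sup>2) = 1" using Sp unfolding S_def by simp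
    then have "norm (\<Sum>i<?n. c' i *\<^sub>R vs ! i) \<in> ?X" by blast
    then have "sigma_min vs \<le> norm (\<Sum>i<?n. c' i *\<^sub>R vs ! i)"
      unfolding sigma_min_def by (rule cInf_lower[OF _ bdd])
    also have "(\<Sum>i<?n. c' i *\<^sub>R vs ! i) = (1 / sqrt S) *\<^sub>R (\<Sum>i<?n. c i *\<^sub>R vs ! i)"
      unfolding c'_def by (simp add: scaleR_sum_right)
    finally have "sigma_min vs \<le> norm (\<Sum>i<?n. c i *\<^sub>R vs ! i) / sqrt S"
      using Sp by simp
    then have "sigma_min vs * sqrt S \<le> norm (\<Sum>i<?n. c i *\<^sub>R vs ! i)"
      using Sp by (simp add: pos_le_divide_eq)
    then show ?thesis using assms(2) Sp
      by (smt (verit) mult_right_mono real_sqrt_ge_zero)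
  qed
qed


lemma sum_lessThan_add: "(\<Sum>i<m+n. g i) = (\<Sum>i<m. g i) + (\<Sum>i<n. g (m+i))"
  for g :: "nat \<Rightarrow> 'b::comm_monoid_add"
  by (induct n) (simp_all add: add.assoc)

lemma sum_append_split:
  fixes F :: "nat \<Rightarrow> 'a \<Rightarrow> 'b::comm_monoid_add"
  shows "(\<Sum>i<length (a@b). F i ((a@b)!i)) = (\<Sum>i<length a. F i (a!i)) + (\<Sum>i<length b. F (length a + i) (b!i))"
proof -
  have "(\<Sum>i<length (a@b). F i ((a@b)!i)) = (\<Sum>i<length a. F i ((a@b)!i)) + (\<Sum>i<length b. F (length a + i) ((a@b)!(length a + i)))"
    using sum_lessThan_add[of "\<lambda>i. F i ((a@b)!i)" "length a" "length b"] by simp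
  also have "(\<Sum>i<length a. F i ((a@b)!i)) = (\<Sum>i<length a. F i (a!i))"
    by (rule sum.cong) (auto simp: nth_append)
  also have "(\<Sum>i<length b. F (length a + i) ((a@b)!(length a + i))) = (\<Sum>i<length b. F (length a + i) (b!i))"
    by (rule sum.cong) (auto simp: nth_append)
  finally show ?thesis .
qed

lemma orth_sum_norm:
  fixes Qt :: "('a::real_inner) list"
  assumes "orthonormal_list Qt"
  shows "(norm (\<Sum>i<length Qt. c i *\<^sub>R (a *\<^sub>R Qt!i)))\<^sup>2 = a\<^sup>2 * (\<Sum>i<length Qt. (c i)\<^sup>2)"
proof -
  let ?n = "length Qt"
  have X: "(\<Sum>i<?n. c i *\<^sub>R (a *\<^sub>R Qt!i)) = (\<Sum>i<?n. (c i * a) *\<^sub>R Qt!i)"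
    by simp
  have "(norm (\<Sum>i<?n. c i *\<^sub>R (a *\<^sub>R Qt!i)))\<^sup>2 =
      (\<Sum>i<?n. \<Sum>j<?n. (c i * a) * ((c j * a) * inner (Qt!j) (Qt!i)))"
    unfolding X power2_norm_eq_inner by (simp add: inner_sum_left inner_sum_right sum_distrib_left)
  also have "\<dots> = (\<Sum>i<?n. \<Sum>j<?n. if i = j then (c i * a) * ((c j * a) * 1) else 0)"
    using assms unfolding orthonormal_list_def by (intro sum.cong refl) auto
  also have "\<dots> = (\<Sum>i<?n. (c i * a) * ((c i * a) * 1))"
    by (intro sum.cong refl) (simp add: sum.delta)
  also have "\<dots> = (\<Sum>i<?n. a\<^sup>2 * (c i)\<^sup>2)"
    by (intro sum.cong refl) (simp add: power2_eq_square algebra_simps)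
  finally show ?thesis by (simp add: sum_distrib_left)
qed

lemma sum_list_nth_sum: "(\<Sum>u\<leftarrow>U. f u) = (\<Sum>l<length U. f (U!l))"
  by (simp add: sum_list_sum_nth atLeast0LessThan)

lemma proj_orth:
  fixes U :: "('a::real_inner) list"
  assumes "orthonormal_list U" "u \<in> set U"
  shows "inner u (w - (\<Sum>v\<leftarrow>U. inner v w *\<^sub>R v)) = 0"
proof -
  obtain k where k: "k < length U" "u = U!k" using assms(2) by (metis in_set_conv_nth)
  have "inner u (\<Sum>v\<leftarrow>U. inner v w *\<^sub>R v) = (\<Sum>l<length U. inner (U!l) w * inner (U!k) (U!l))"
    by (simp add: sum_list_nth_sum inner_sum_right k)
  also have "\<dots> = (\<Sum>l<length U. if l = k then inner (U!k) w else 0)"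
    using assms(1) k unfolding orthonormal_list_def by (intro sum.cong refl) auto
  also have "\<dots> = inner u w" using k by simp
  finally show ?thesis by (simp add: inner_diff_right)
qed

lemma gen_props:
  assumes "gen q \<Delta> U out" "orthonormal_list U"
  shows "\<exists>Qt. out = map (\<lambda>v. \<Delta> *\<^sub>R v) Qt \<and> orthonormal_list Qt \<and> length Qt = q \<and>
            (\<forall>y\<in>span (set U). \<forall>z\<in>set Qt. inner y z = 0)"
proof -
  obtain A Qt Rt where g: "length A = q" "length Qt = q" "orthonormal_list Qt" "sq_invertible q Rt"
    "\<forall>j<q. A ! j - (\<Sum>u\<leftarrow>U. inner u (A ! j) *\<^sub>R u) = (\<Sum>i<q. Rt i j *\<^sub>R Qt ! i)"
    "out = map (\<lambda>v. \<Delta> *\<^sub>R v) Qt"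
    using assms(1) unfolding gen_def by blast
  obtain Ri where Ri: "\<forall>i<q. \<forall>j<q. (\<Sum>l<q. Rt i l * Ri l j) = (if i = j then 1 else 0)"
    using g(4) unfolding sq_invertible_def by blast
  define w where "w j = A ! j - (\<Sum>u\<leftarrow>U. inner u (A ! j) *\<^sub>R u)" for j
  have worth: "inner u (w j) = 0" if "u \<in> set U" for u j
    unfolding w_def by (rule proj_orth[OF assms(2) that])
  have Qrep: "Qt ! m = (\<Sum>j<q. Ri j m *\<^sub>R w j)" if m: "m < q" for m
  proof -
    have "(\<Sum>j<q. Ri j m *\<^sub>R w j) = (\<Sum>j<q. Ri j m *\<^sub>R (\<Sum>i<q. Rt i j *\<^sub>R Qt ! i))"
      using g(5) unfolding w_def by (intro sum.cong refl) auto
    also have "\<dots> = (\<Sum>j<q. \<Sum>i<q. (Rt i j * Ri j m) *\<^sub>R Qt ! i)"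
      by (simp add: scaleR_sum_right mult.commute)
    also have "\<dots> = (\<Sum>i<q. \<Sum>j<q. (Rt i j * Ri j m) *\<^sub>R Qt ! i)"
      by (rule sum.swap)
    also have "\<dots> = (\<Sum>i<q. (\<Sum>j<q. Rt i j * Ri j m) *\<^sub>R Qt ! i)"
      by (simp add: scaleR_sum_left)
    also have "\<dots> = (\<Sum>i<q. (if i = m then 1 else 0) *\<^sub>R Qt ! i)"
      using Ri m by (intro sum.cong refl) auto
    also have "\<dots> = (\<Sum>i<q. if i = m then Qt ! i else 0)"
      by (intro sum.cong refl) auto
    also have "\<dots> = Qt ! m" using m by simp
    finally show ?thesis by simp
  qed
  have "\<forall>y\<in>span (set U). \<forall>z\<in>set Qt. inner y z = 0"
  proof (intro ballI)
    fix y z assume y: "y \<in> span (set U)" and z: "z \<in> set Qt"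
    obtain m where m: "m < q" "z = Qt ! m" using z g(2) by (metis in_set_conv_nth)
    have "orthogonal z y"
    proof (rule orthogonal_to_span[OF y])
      fix u assume "u \<in> set U"
      then have "inner u (Qt ! m) = 0"
        using worth unfolding Qrep[OF m(1)] by (simp add: inner_sum_right)
      then show "orthogonal z u"
        unfolding orthogonal_def m(2) by (simp add: inner_commute)
    qed
    then show "inner y z = 0" by (simp add: orthogonal_def inner_commute)
  qed
  then show ?thesis using g by blast
qed

lemma cols_are_mult:
  fixes D :: "real^'p^'n"
  assumes "cols_are D cs"
  shows "\<exists>c. D *v v = (\<Sum>i<length cs. c i *\<^sub>R cs!i) \<and> (\<Sum>i<length cs. (c i)\<^sup>2) = (norm v)\<^sup>2"
proof -
  obtain e :: "'p \<Rightarrow> nat" where e: "bij_betw e UNIV {..<length cs}" "\<forall>j. column j D = cs ! e j"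
    using assms unfolding cols_are_def by blast
  define c where "c i = v $ (inv_into UNIV e i)" for i
  have ce: "c (e j) = v $ j" for j
    unfolding c_def using e(1) by (simp add: bij_betw_def inv_into_f_f)
  have "D *v v = (\<Sum>j\<in>UNIV. c (e j) *\<^sub>R cs ! (e j))"
    by (simp add: matrix_mult_sum scalar_mult_eq_scaleR ce e(2))
  also have "\<dots> = (\<Sum>i<length cs. c i *\<^sub>R cs!i)"
    by (rule sum.reindex_bij_betw[OF e(1), of "\<lambda>i. c i *\<^sub>R cs!i"])
  finally have 1: "D *v v = (\<Sum>i<length cs. c i *\<^sub>R cs!i)" .
  have "(norm v)\<^sup>2 = (\<Sum>j\<in>UNIV. v$j * v$j)"
    by (simp only: power2_norm_eq_inner inner_vec_def inner_real_def)
  also have "\<dots> = (\<Sum>j\<in>UNIV. (c (e j))\<^sup>2)"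
    by (simp add: ce power2_eq_square)
  also have "\<dots> = (\<Sum>i<length cs. (c i)\<^sup>2)"
    by (rule sum.reindex_bij_betw[OF e(1), of "\<lambda>i. (c i)\<^sup>2"])
  finally show ?thesis using 1 by auto
qed

lemma cols_are_col:
  assumes "cols_are D cs"
  shows "column j D \<in> set cs"
proof -
  obtain e where e: "bij_betw e UNIV {..<length cs}" "\<forall>j. column j D = cs ! e j"
    using assms unfolding cols_are_def by blast
  have "e j < length cs" using bij_betw_apply[OF e(1)] by auto
  then show ?thesis using e(2) by simp
qed

lemma lbnd_cols:
  fixes D :: "real^'p^'n"
  assumes "lbnd s cs" "cols_are D cs"
  shows "s * norm v \<le> norm (D *v v)"
proof -
  obtain c where c: "D *v v = (\<Sum>i<length cs. c i *\<^sub>R cs!i)" "(\<Sum>i<length cs. (c i)\<^sup>2) = (norm v)\<^sup>2"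
    using cols_are_mult[OF assms(2)] by blast
  show ?thesis using assms(1)[unfolded lbnd_def, rule_format, of c] c by simp
qed

lemma lbnd_append:
  fixes a :: "('a::real_inner) list"
  assumes a: "lbnd s a" and Qt: "orthonormal_list Qt" and orth: "\<forall>y\<in>set a. \<forall>z\<in>set Qt. inner y z = 0"
    and s: "0 \<le> s" and d: "0 < d"
  shows "lbnd (min s d) (a @ map (\<lambda>v. d *\<^sub>R v) Qt)"
  unfolding lbnd_def
proof
  fix c :: "nat \<Rightarrow> real"
  let ?b = "map (\<lambda>v. d *\<^sub>R v) Qt"
  define A where "A = (\<Sum>i<length a. c i *\<^sub>R a!i)"
  define B where "B = (\<Sum>i<length Qt. c (length a + i) *\<^sub>R (d *\<^sub>R Qt!i))"
  define S1 where "S1 = (\<Sum>i<length a. (c i)\<^sup>2)"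
  define S2 where "S2 = (\<Sum>i<length Qt. (c (length a + i))\<^sup>2)"
  have sum1: "(\<Sum>i<length (a @ ?b). c i *\<^sub>R (a @ ?b)!i) = A + B"
    unfolding A_def B_def using sum_append_split[of "\<lambda>i v. c i *\<^sub>R v" a ?b] by simp
  have sum2: "(\<Sum>i<length (a @ ?b). (c i)\<^sup>2) = S1 + S2"
    unfolding S1_def S2_def using sum_append_split[of "\<lambda>i v. (c i)\<^sup>2" a ?b] by simp
  have h0: "inner (a!i) (Qt!j) = 0" if "i < length a" "j < length Qt" for i j
    using orth that by (meson nth_mem)
  have h1: "inner (a!i) B = 0" if "i < length a" for i
    unfolding B_def by (simp add: inner_sum_right h0 that)
  have AB: "inner A B = 0"
    unfolding A_def by (simp add: inner_sum_left h1)
  have nA: "s * sqrt S1 \<le> norm A" using a[unfolded lbnd_def, rule_format, of c] unfolding A_def S1_def .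
  have nB: "(norm B)\<^sup>2 = d\<^sup>2 * S2" unfolding B_def S2_def by (rule orth_sum_norm[OF Qt])
  have S1: "0 \<le> S1" "0 \<le> S2" unfolding S1_def S2_def by (auto intro: sum_nonneg)
  define m where "m = min s d"
  have m0: "0 \<le> m" using s d unfolding m_def by simp
  have ms: "m\<^sup>2 \<le> s\<^sup>2" using m0 unfolding m_def by (intro power_mono) auto
  have md: "m\<^sup>2 \<le> d\<^sup>2" using m0 unfolding m_def by (intro power_mono) auto
  have "(m * sqrt (S1 + S2))\<^sup>2 = m\<^sup>2 * S1 + m\<^sup>2 * S2"
    using S1 by (simp add: power_mult_distrib distrib_left)
  also have "\<dots> \<le> s\<^sup>2 * S1 + d\<^sup>2 * S2"
    using S1 ms md by (intro add_mono mult_right_mono) auto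
  also have "s\<^sup>2 * S1 = (s * sqrt S1)\<^sup>2"
    using S1 by (simp add: power_mult_distrib)
  also have "(s * sqrt S1)\<^sup>2 \<le> (norm A)\<^sup>2"
    using nA s S1 by (intro power_mono) auto
  also have "(norm A)\<^sup>2 + d\<^sup>2 * S2 = (norm (A + B))\<^sup>2"
    unfolding nB[symmetric] using AB
    by (simp add: power2_norm_eq_inner inner_add_left inner_add_right inner_commute[of B A])
  finally have "(m * sqrt (S1 + S2))\<^sup>2 \<le> (norm (A + B))\<^sup>2" by simp
  then have "m * sqrt (S1 + S2) \<le> norm (A + B)" by (rule power2_le_imp_le) simp
  then show "min s d * sqrt (\<Sum>i<length (a @ ?b). (c i)\<^sup>2) \<le> norm (\<Sum>i<length (a @ ?b). c i *\<^sub>R (a @ ?b)!i)"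
    using sum1 sum2 unfolding m_def by simp
qed


lemma step_facts:
  fixes D D' :: "real^'p^'n"
  assumes "clarsta_step f C prand \<Delta>max \<gamma>dec \<gamma>inc \<eta>1 \<eta>2 \<mu> \<epsilon>rad \<epsilon>geo \<Delta>min k x \<Delta> D x' \<Delta>' D'"
  shows "\<Delta>min \<le> \<Delta>' \<and>
   (((\<exists>\<rho>::real. \<Delta>' = (if \<rho> < \<eta>1 then \<gamma>dec * \<Delta> else if \<rho> > \<eta>2 then min (\<gamma>inc k * \<Delta>) \<Delta>max else \<Delta>)) \<and>
    (\<exists>(DU1::(real^'n) list) DU2 DU3 U DR. remove_while \<epsilon>geo \<Delta>' (filter (\<lambda>d. norm d \<le> \<epsilon>rad * \<Delta>') DU1) DU2 \<and>
       (\<exists>r. remove_rel \<Delta>' r DU2 DU3) \<and> orthonormal_list U \<and> span (set U) = span (set DU3) \<and>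
       gen (CARD('p) - length DU3) \<Delta>' U DR \<and> cols_are D' (DU3 @ DR)))
   \<or> (\<Delta>' = \<gamma>dec * \<Delta> \<and> D' = \<gamma>dec *\<^sub>R D))"
proof -
  obtain Q R where QR: "(if \<Delta> \<le> \<mu> * crit_meas f C x Q R then
        (\<exists>sh::real^'p. norm sh \<le> \<Delta> \<and>
          (let s = closest_point C (x + Q *v sh) - x;
               \<rho> = (f x - f (x + s)) / (model f x Q R 0 - model f x Q R sh);
               dirs = insert 0 (range (\<lambda>i. column i D));
               trial = {x + a + b | a b. a \<in> dirs \<and> b \<in> dirs \<and> x + a + b \<in> C}
           in \<Delta>' = (if \<rho> < \<eta>1 then \<gamma>dec * \<Delta>
                    else if \<rho> > \<eta>2 then min (\<gamma>inc k * \<Delta>) \<Delta>max else \<Delta>) \<and>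
              x' \<in> C \<and> f x' \<le> f (x + s) \<and> (\<forall>y\<in>trial. f x' \<le> f y) \<and>
              (\<exists>DU0 DU1 DU2 DU3 U DR.
                 length DU0 \<le> CARD('p) \<and> lin_indep_list DU0 \<and>
                 set DU0 \<subseteq> (\<lambda>y. y - x') ` (insert (x + s) trial) \<and>
                 remove_rel \<Delta>' prand DU0 DU1 \<and>
                 remove_while \<epsilon>geo \<Delta>' (filter (\<lambda>d. norm d \<le> \<epsilon>rad * \<Delta>') DU1) DU2 \<and>
                 (\<exists>r. remove_rel \<Delta>' r DU2 DU3) \<and>
                 orthonormal_list U \<and> span (set U) = span (set DU3) \<and>
                 gen (CARD('p) - length DU3) \<Delta>' U DR \<and>
                 cols_are D' (DU3 @ DR))))
      else \<Delta>' = \<gamma>dec * \<Delta> \<and> x' = x \<and> D' = \<gamma>dec *\<^sub>R D)" and lo: "\<Delta>min \<le> \<Delta>'"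
    using assms unfolding clarsta_step_def by blast
  show ?thesis
  proof (cases "\<Delta> \<le> \<mu> * crit_meas f C x Q R")
    case True
    with QR obtain sh :: "real^'p" where sh: "let s = closest_point C (x + Q *v sh) - x;
               \<rho> = (f x - f (x + s)) / (model f x Q R 0 - model f x Q R sh);
               dirs = insert 0 (range (\<lambda>i. column i D));
               trial = {x + a + b | a b. a \<in> dirs \<and> b \<in> dirs \<and> x + a + b \<in> C}
           in \<Delta>' = (if \<rho> < \<eta>1 then \<gamma>dec * \<Delta>
                    else if \<rho> > \<eta>2 then min (\<gamma>inc k * \<Delta>) \<Delta>max else \<Delta>) \<and>
              x' \<in> C \<and> f x' \<le> f (x + s) \<and> (\<forall>y\<in>trial. f x' \<le> f y) \<and>
              (\<exists>DU0 DU1 DU2 DU3 U DR.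
                 length DU0 \<le> CARD('p) \<and> lin_indep_list DU0 \<and>
                 set DU0 \<subseteq> (\<lambda>y. y - x') ` (insert (x + s) trial) \<and>
                 remove_rel \<Delta>' prand DU0 DU1 \<and>
                 remove_while \<epsilon>geo \<Delta>' (filter (\<lambda>d. norm d \<le> \<epsilon>rad * \<Delta>') DU1) DU2 \<and>
                 (\<exists>r. remove_rel \<Delta>' r DU2 DU3) \<and>
                 orthonormal_list U \<and> span (set U) = span (set DU3) \<and>
                 gen (CARD('p) - length DU3) \<Delta>' U DR \<and>
                 cols_are D' (DU3 @ DR))"
      by auto
    define \<rho> where "\<rho> = (f x - f (x + (closest_point C (x + Q *v sh) - x))) / (model f x Q R 0 - model f x Q R sh)"
    have "\<Delta>' = (if \<rho> < \<eta>1 then \<gamma>dec * \<Delta> else if \<rho> > \<eta>2 then min (\<gamma>inc k * \<Delta>) \<Delta>max else \<Delta>)"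
      using sh unfolding Let_def \<rho>_def by blast
    moreover have "\<exists>(DU1::(real^'n) list) DU2 DU3 U DR. remove_while \<epsilon>geo \<Delta>' (filter (\<lambda>d. norm d \<le> \<epsilon>rad * \<Delta>') DU1) DU2 \<and>
       (\<exists>r. remove_rel \<Delta>' r DU2 DU3) \<and> orthonormal_list U \<and> span (set U) = span (set DU3) \<and>
       gen (CARD('p) - length DU3) \<Delta>' U DR \<and> cols_are D' (DU3 @ DR)"
      using sh unfolding Let_def by blast
    ultimately show ?thesis using lo by blast
  next
    case False
    then show ?thesis using QR lo by simp
  qed
qed


lemma column_scaleR: "column j (c *\<^sub>R (D::real^'p^'n)) = c *\<^sub>R column j D"
  by (simp add: vec_eq_iff column_def)

lemma orthonormal_norm: "orthonormal_list Qt \<Longrightarrow> q \<in> set Qt \<Longrightarrow> norm q = 1"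
proof -
  assume o: "orthonormal_list Qt" and q: "q \<in> set Qt"
  then obtain i where "i < length Qt" "q = Qt ! i" by (metis in_set_conv_nth)
  then have "inner q q = 1" using o unfolding orthonormal_list_def by simp
  then show "norm q = 1" by (simp add: norm_eq_1)
qed

lemma invariant:
  fixes D :: "real^'p^'n"
  assumes iter: "clarsta_iter f C prand x0 \<Delta>0 \<Delta>min \<Delta>max \<gamma>dec \<gamma>inc \<eta>1 \<eta>2 \<mu> \<epsilon>rad \<epsilon>geo k x \<Delta> D"
    and A: "0 < \<Delta>0" "\<Delta>0 \<le> \<Delta>max" "0 < \<Delta>min" "\<Delta>min \<le> \<Delta>max" "0 < \<gamma>dec" "\<gamma>dec < 1" "1 \<le> \<epsilon>rad" "0 < \<epsilon>geo"
  shows "0 < \<Delta> \<and> \<Delta> \<le> \<Delta>max \<and> (\<forall>j. norm (column j D) \<le> \<epsilon>rad * \<Delta>) \<and>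
    (\<forall>v. \<epsilon>rad * \<Delta> * norm v \<le> max (1 / \<epsilon>geo) (1 / \<Delta>min) * \<epsilon>rad * \<Delta>max * norm (D *v v))"
  using iter
proof induction
  case (init cs D0)
  define M where "M = max (1 / \<epsilon>geo) (1 / \<Delta>min) * \<epsilon>rad * \<Delta>max"
  have M1: "\<epsilon>rad \<le> M"
  proof -
    have "1 \<le> (1 / \<Delta>min) * \<Delta>max" using A by (simp add: field_simps)
    also have "\<dots> \<le> max (1 / \<epsilon>geo) (1 / \<Delta>min) * \<Delta>max" using A by (intro mult_right_mono) auto
    finally have X: "1 \<le> max (1 / \<epsilon>geo) (1 / \<Delta>min) * \<Delta>max" .
    have "\<epsilon>rad * 1 \<le> \<epsilon>rad * (max (1 / \<epsilon>geo) (1 / \<Delta>min) * \<Delta>max)"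
      using X A by (intro mult_left_mono) auto
    then show ?thesis unfolding M_def by (simp add: ac_simps)
  qed
  obtain Qt where Qt: "cs = map (\<lambda>v. \<Delta>0 *\<^sub>R v) Qt" "orthonormal_list Qt"
    using gen_props[OF init(1)] by (auto simp: orthonormal_list_def)
  have "lbnd (min \<Delta>0 \<Delta>0) ([] @ map (\<lambda>v. \<Delta>0 *\<^sub>R v) Qt)"
    by (rule lbnd_append[OF lbnd_Nil Qt(2)]) (use A in auto)
  then have lb: "lbnd \<Delta>0 cs" using Qt by simp
  have "\<epsilon>rad * \<Delta>0 * norm v \<le> M * norm (D0 *v v)" for v
  proof -
    have "\<Delta>0 * norm v \<le> norm (D0 *v v)" by (rule lbnd_cols[OF lb init(2)])
    then have "\<epsilon>rad * (\<Delta>0 * norm v) \<le> M * norm (D0 *v v)"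
      using M1 A by (intro mult_mono) auto
    then show ?thesis by (simp add: mult.assoc)
  qed
  moreover have "norm (column j D0) \<le> \<epsilon>rad * \<Delta>0" for j
  proof -
    have "column j D0 \<in> set cs" by (rule cols_are_col[OF init(2)])
    then obtain q where "q \<in> set Qt" "column j D0 = \<Delta>0 *\<^sub>R q" using Qt by auto
    then have "norm (column j D0) = \<Delta>0" using orthonormal_norm[OF Qt(2)] A by simp
    then show ?thesis using A by simp
  qed
  ultimately show ?case using A unfolding M_def by auto
next
  case (step k x \<Delta> D x' \<Delta>' D')
  define M where "M = max (1 / \<epsilon>geo) (1 / \<Delta>min) * \<epsilon>rad * \<Delta>max"
  have IH: "0 < \<Delta>" "\<Delta> \<le> \<Delta>max" "\<And>j. norm (column j D) \<le> \<epsilon>rad * \<Delta>"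
    "\<And>v. \<epsilon>rad * \<Delta> * norm v \<le> M * norm (D *v v)"
    using step.IH unfolding M_def by auto
  have M0: "0 \<le> M" unfolding M_def using A
    by (intro mult_nonneg_nonneg) (auto simp: le_max_iff_disj)
  have gd0: "\<gamma>dec * \<Delta> \<le> \<Delta>" using A IH by simp
  then have gd: "\<gamma>dec * \<Delta> \<le> \<Delta>max" using IH(2) by linarith
  note sf = step_facts[OF step.hyps(2)]
  have lo: "\<Delta>min \<le> \<Delta>'" using sf by blast
  from sf consider (a) "(\<exists>\<rho>::real. \<Delta>' = (if \<rho> < \<eta>1 then \<gamma>dec * \<Delta> else if \<rho> > \<eta>2 then min (\<gamma>inc k * \<Delta>) \<Delta>max else \<Delta>)) \<and>
    (\<exists>(DU1::(real^'n) list) DU2 DU3 U DR. remove_while \<epsilon>geo \<Delta>' (filter (\<lambda>d. norm d \<le> \<epsilon>rad * \<Delta>') DU1) DU2 \<and>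
       (\<exists>r. remove_rel \<Delta>' r DU2 DU3) \<and> orthonormal_list U \<and> span (set U) = span (set DU3) \<and>
       gen (CARD('p) - length DU3) \<Delta>' U DR \<and> cols_are D' (DU3 @ DR))"
    | (b) "\<Delta>' = \<gamma>dec * \<Delta> \<and> D' = \<gamma>dec *\<^sub>R D" by blast
  then show ?case
  proof cases
    case b
    then have e: "\<Delta>' = \<gamma>dec * \<Delta>" "D' = \<gamma>dec *\<^sub>R D" by auto
    have "\<gamma>dec * \<Delta> \<le> \<Delta>" using A IH by simp
    then have "\<gamma>dec * \<Delta> \<le> \<Delta>max" using IH(2) by linarith
    moreover have "norm (column j D') \<le> \<epsilon>rad * \<Delta>'" for j
      using IH(3)[of j] A unfolding e by (simp add: column_scaleR mult.left_commute)
    moreover have "\<epsilon>rad * \<Delta>' * norm v \<le> M * norm (D' *v v)" for v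
    proof -
      have "D' *v v = \<gamma>dec *\<^sub>R (D *v v)" unfolding e by (simp add: scaleR_matrix_vector_assoc)
      then have eq1: "M * norm (D' *v v) = \<gamma>dec * (M * norm (D *v v))" using A by simp
      have eq2: "\<epsilon>rad * \<Delta>' * norm v = \<gamma>dec * (\<epsilon>rad * \<Delta> * norm v)" unfolding e by simp
      have "\<gamma>dec * (\<epsilon>rad * \<Delta> * norm v) \<le> \<gamma>dec * (M * norm (D *v v))"
        using IH(4)[of v] A by (intro mult_left_mono) auto
      then show ?thesis unfolding eq1 eq2 .
    qed
    ultimately show ?thesis using A IH e unfolding M_def by auto
  next
    case a
    then obtain \<rho> :: real and DU1 :: "(real^'n) list" and DU2 DU3 U DR r where
      D1: "\<Delta>' = (if \<rho> < \<eta>1 then \<gamma>dec * \<Delta> else if \<rho> > \<eta>2 then min (\<gamma>inc k * \<Delta>) \<Delta>max else \<Delta>)"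
      and rw: "remove_while \<epsilon>geo \<Delta>' (filter (\<lambda>d. norm d \<le> \<epsilon>rad * \<Delta>') DU1) DU2"
      and rr: "remove_rel \<Delta>' r DU2 DU3" and U: "orthonormal_list U" "span (set U) = span (set DU3)"
      and g: "gen (CARD('p) - length DU3) \<Delta>' U DR" and ca: "cols_are D' (DU3 @ DR)"
      by blast
    have Dp: "0 < \<Delta>'" using lo A by simp
    have Dm: "\<Delta>' \<le> \<Delta>max" using D1 IH(2) gd by (auto split: if_splits)
    have w: "set DU2 \<subseteq> set (filter (\<lambda>d. norm d \<le> \<epsilon>rad * \<Delta>') DU1)" "DU2 = [] \<or> \<epsilon>geo \<le> sigma_min DU2"
      using remove_while_props[OF rw] by auto
    have lb2: "lbnd \<epsilon>geo DU2"
      using w(2) lbnd_sigma[of DU2 \<epsilon>geo] lbnd_Nil[of \<epsilon>geo] by auto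
    have r3: "set DU3 \<subseteq> set DU2" "lbnd \<epsilon>geo DU3"
      using remove_rel_props[OF rr, of \<epsilon>geo] lb2 by auto
    obtain Qt where Qt: "DR = map (\<lambda>v. \<Delta>' *\<^sub>R v) Qt" "orthonormal_list Qt"
      "\<forall>y\<in>span (set U). \<forall>z\<in>set Qt. inner y z = 0"
      using gen_props[OF g U(1)] by blast
    have orth: "\<forall>y\<in>set DU3. \<forall>z\<in>set Qt. inner y z = 0"
      using Qt(3) U(2) by (metis span_base)
    have "lbnd (min \<epsilon>geo \<Delta>') (DU3 @ map (\<lambda>v. \<Delta>' *\<^sub>R v) Qt)"
      by (rule lbnd_append[OF r3(2) Qt(2) orth]) (use A Dp in auto)
    then have lb: "lbnd (min \<epsilon>geo \<Delta>') (DU3 @ DR)" using Qt by simp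
    have Mm: "\<epsilon>rad * \<Delta>' \<le> M * min \<epsilon>geo \<Delta>'"
    proof -
      have "\<epsilon>rad * \<Delta>' \<le> M * \<epsilon>geo"
      proof -
        have "\<epsilon>rad * \<Delta>' \<le> \<epsilon>rad * \<Delta>max" using Dm A by simp
        also have "\<dots> = (1 / \<epsilon>geo) * \<epsilon>rad * \<Delta>max * \<epsilon>geo" using A by simp
        also have "\<dots> \<le> M * \<epsilon>geo" unfolding M_def using A
          by (intro mult_right_mono) auto
        finally show ?thesis .
      qed
      moreover have "\<epsilon>rad * \<Delta>' \<le> M * \<Delta>'"
      proof -
        have "\<epsilon>rad * \<Delta>' \<le> (1 / \<Delta>min) * \<epsilon>rad * \<Delta>max * \<Delta>'"
        proof -
          have "1 \<le> (1 / \<Delta>min) * \<Delta>max" using A by (simp add: field_simps)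
          then have "\<epsilon>rad * \<Delta>' * 1 \<le> \<epsilon>rad * \<Delta>' * ((1 / \<Delta>min) * \<Delta>max)"
            using A Dp by (intro mult_left_mono) auto
          then show ?thesis by (simp add: algebra_simps)
        qed
        also have "\<dots> \<le> M * \<Delta>'" unfolding M_def using A Dp
          by (intro mult_right_mono) auto
        finally show ?thesis .
      qed
      ultimately show ?thesis by (simp add: min_def)
    qed
    have "\<epsilon>rad * \<Delta>' * norm v \<le> M * norm (D' *v v)" for v
    proof -
      have "min \<epsilon>geo \<Delta>' * norm v \<le> norm (D' *v v)" by (rule lbnd_cols[OF lb ca])
      then have "M * (min \<epsilon>geo \<Delta>' * norm v) \<le> M * norm (D' *v v)"
        using M0 by (intro mult_left_mono) auto
      moreover have "\<epsilon>rad * \<Delta>' * norm v \<le> M * min \<epsilon>geo \<Delta>' * norm v"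
        using Mm by (intro mult_right_mono) auto
      ultimately show ?thesis by (simp add: mult.assoc)
    qed
    moreover have "norm (column j D') \<le> \<epsilon>rad * \<Delta>'" for j
    proof -
      have "column j D' \<in> set (DU3 @ DR)" by (rule cols_are_col[OF ca])
      then consider "column j D' \<in> set DU3" | "column j D' \<in> set DR" by auto
      then show ?thesis
      proof cases
        case 1 then show ?thesis using r3(1) w(1) by auto
      next
        case 2
        then obtain q where "q \<in> set Qt" "column j D' = \<Delta>' *\<^sub>R q" using Qt by auto
        then have "norm (column j D') = \<Delta>'" using orthonormal_norm[OF Qt(2)] Dp by simp
        then show ?thesis using A Dp by simp
      qed
    qed
    ultimately show ?thesis using Dp Dm unfolding M_def by auto
  qed
qed


lemma taylor_bound:
  fixes f :: "'a::real_inner \<Rightarrow> real"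
  assumes grad: "\<And>y. (f has_derivative (\<lambda>h. inner (f' y) h)) (at y)"
    and lip: "L-lipschitz_on UNIV f'"
  shows "\<bar>f (x + d) - f x - inner (f' x) d\<bar> \<le> L / 2 * (norm d)\<^sup>2"
proof -
  have L0: "0 \<le> L" and Ld: "\<And>y z. dist (f' y) (f' z) \<le> L * dist y z"
    using lip unfolding lipschitz_on_def by auto
  have dF: "((\<lambda>t. f (x + t *\<^sub>R d)) has_real_derivative inner (f' (x + t *\<^sub>R d)) d) (at t)" for t
  proof -
    have g: "((\<lambda>t. x + t *\<^sub>R d) has_derivative (\<lambda>h. h *\<^sub>R d)) (at t)"
      by (auto intro!: derivative_eq_intros)
    have "((\<lambda>t. f (x + t *\<^sub>R d)) has_derivative (\<lambda>h. inner (f' (x + t *\<^sub>R d)) (h *\<^sub>R d))) (at t)"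
      using has_derivative_compose[OF g grad] by simp
    moreover have "(\<lambda>h. inner (f' (x + t *\<^sub>R d)) (h *\<^sub>R d)) = (*) (inner (f' (x + t *\<^sub>R d)) d)"
      by (auto simp: fun_eq_iff)
    ultimately show ?thesis by (simp add: has_field_derivative_def)
  qed
  define a where "a = inner (f' x) d"
  define K where "K = L / 2 * (norm d)\<^sup>2"
  have bnd: "\<bar>inner (f' (x + t *\<^sub>R d)) d - a\<bar> \<le> K * (2 * t)" if t: "0 \<le> t" for t
  proof -
    have "\<bar>inner (f' (x + t *\<^sub>R d)) d - a\<bar> = \<bar>inner (f' (x + t *\<^sub>R d) - f' x) d\<bar>"
      unfolding a_def by (simp add: inner_diff_left)
    also have "\<dots> \<le> norm (f' (x + t *\<^sub>R d) - f' x) * norm d" by (rule Cauchy_Schwarz_ineq2)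
    also have "\<dots> \<le> (L * (t * norm d)) * norm d"
    proof (rule mult_right_mono)
      have "norm (f' (x + t *\<^sub>R d) - f' x) \<le> L * dist (x + t *\<^sub>R d) x"
        using Ld[of "x + t *\<^sub>R d" x] by (simp add: dist_norm)
      also have "dist (x + t *\<^sub>R d) x = t * norm d" using t by (simp add: dist_norm)
      finally show "norm (f' (x + t *\<^sub>R d) - f' x) \<le> L * (t * norm d)" .
    qed simp
    also have "\<dots> = K * (2 * t)" unfolding K_def by (simp add: power2_eq_square)
    finally show ?thesis .
  qed
  have d1: "((\<lambda>t. K * t\<^sup>2 - (f (x + t *\<^sub>R d) - f x - t * a)) has_real_derivative
      (K * (2 * t) - (inner (f' (x + t *\<^sub>R d)) d - a))) (at t)" for t
    by (auto intro!: derivative_eq_intros dF)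
  have d2: "((\<lambda>t. K * t\<^sup>2 + (f (x + t *\<^sub>R d) - f x - t * a)) has_real_derivative
      (K * (2 * t) + (inner (f' (x + t *\<^sub>R d)) d - a))) (at t)" for t
    by (auto intro!: derivative_eq_intros dF)
  have "(\<lambda>t. K * t\<^sup>2 - (f (x + t *\<^sub>R d) - f x - t * a)) 0 \<le> (\<lambda>t. K * t\<^sup>2 - (f (x + t *\<^sub>R d) - f x - t * a)) 1"
  proof (rule DERIV_nonneg_imp_nondecreasing[of 0 1])
    fix t :: real assume "0 \<le> t" "t \<le> 1"
    then show "\<exists>y. ((\<lambda>t. K * t\<^sup>2 - (f (x + t *\<^sub>R d) - f x - t * a)) has_real_derivative y) (at t) \<and> 0 \<le> y"
      using d1[of t] bnd[of t] by (intro exI[of _ "K * (2 * t) - (inner (f' (x + t *\<^sub>R d)) d - a)"]) auto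
  qed simp
  then have u1: "f (x + d) - f x - a \<le> K" by simp
  have "(\<lambda>t. K * t\<^sup>2 + (f (x + t *\<^sub>R d) - f x - t * a)) 0 \<le> (\<lambda>t. K * t\<^sup>2 + (f (x + t *\<^sub>R d) - f x - t * a)) 1"
  proof (rule DERIV_nonneg_imp_nondecreasing[of 0 1])
    fix t :: real assume "0 \<le> t" "t \<le> 1"
    then show "\<exists>y. ((\<lambda>t. K * t\<^sup>2 + (f (x + t *\<^sub>R d) - f x - t * a)) has_real_derivative y) (at t) \<and> 0 \<le> y"
      using d2[of t] bnd[of t] by (intro exI[of _ "K * (2 * t) + (inner (f' (x + t *\<^sub>R d)) d - a)"]) auto
  qed simp
  then have u2: "- K \<le> f (x + d) - f x - a" by simp
  have "\<bar>f (x + d) - f x - a\<bar> \<le> K" using u1 u2 by (simp add: abs_le_iff)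
  then show ?thesis unfolding a_def K_def .
qed


lemma inner_mv: "inner (A *v x) y = inner x (transpose A *v y)"
  for A :: "real^'m^'k"
proof -
  have "inner x (transpose A *v y) = inner (y v* A) x" by (simp add: transpose_matrix_vector inner_commute)
  also have "\<dots> = inner y (A *v x)" by (rule dot_lmul_matrix)
  finally show ?thesis by (simp add: inner_commute)
qed

lemma matrix_inv_props:
  assumes "invertible (A::real^'m^'m)"
  shows "A ** matrix_inv A = mat 1 \<and> matrix_inv A ** A = mat 1"
  using assms unfolding matrix_inv_def invertible_def by (rule someI_ex)

lemma transpose_mv_nth: "(transpose A *v y) $ i = inner (column i A) y"
  for A :: "real^'m^'k"
  by (simp add: matrix_vector_mult_def transpose_def column_def inner_vec_def mult.commute)

lemma column_mult: "column i (Q ** R) = Q *v column i R"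
  for Q :: "real^'m^'k" and R :: "real^'p^'m"
  by (simp add: vec_eq_iff matrix_matrix_mult_def matrix_vector_mult_def column_def)

lemma norm_sq_vec: "(norm (e::real^'m))\<^sup>2 = (\<Sum>i\<in>UNIV. (e $ i)\<^sup>2)"
proof -
  have "(norm e)\<^sup>2 = (\<Sum>i\<in>UNIV. e $ i * e $ i)"
    by (simp only: power2_norm_eq_inner inner_vec_def inner_real_def)
  then show ?thesis by (simp add: power2_eq_square)
qed

lemma iso_Q:
  fixes Q :: "real^'p^'n"
  assumes "transpose Q ** Q = mat 1"
  shows "norm (Q *v v) = norm v"
proof -
  have "(norm (Q *v v))\<^sup>2 = inner v (transpose Q *v (Q *v v))"
    by (simp add: power2_norm_eq_inner inner_mv)
  also have "\<dots> = (norm v)\<^sup>2"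
    by (simp add: matrix_vector_mul_assoc assms power2_norm_eq_inner)
  finally show ?thesis by (simp add: power2_eq_iff_nonneg)
qed


lemma grad_err:
  fixes f :: "real^'n \<Rightarrow> real" and Q :: "real^'p^'n" and R :: "real^'p^'p" and D :: "real^'p^'n"
  assumes grad: "\<And>y. (f has_derivative (\<lambda>h. inner (f' y) h)) (at y)"
    and lip: "L-lipschitz_on UNIV f'"
    and QR: "is_QR D Q R"
    and Dp: "0 < \<Delta>" and col: "\<forall>j. norm (column j D) \<le> \<epsilon>rad * \<Delta>"
    and lb: "\<forall>v. \<epsilon>rad * \<Delta> * norm v \<le> M * norm (D *v v)"
    and M0: "0 \<le> M" and er: "1 \<le> \<epsilon>rad"
  shows "norm (model_grad f x Q R - transpose Q *v f' x) \<le> sqrt (real CARD('p)) * M * (L/2) * \<epsilon>rad * \<Delta>"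
proof -
  have L0: "0 \<le> L" using lip unfolding lipschitz_on_def by auto
  have D: "D = Q ** R" and QQ: "transpose Q ** Q = mat 1" and Ri: "invertible R"
    using QR unfolding is_QR_def by auto
  define g where "g = model_grad f x Q R"
  define h where "h = g - transpose Q *v f' x"
  define e where "e = transpose R *v h"
  define B where "B = L / 2 * (\<epsilon>rad * \<Delta>)\<^sup>2"
  have B0: "0 \<le> B" unfolding B_def using L0 by simp
  have Rg: "transpose R *v g = model_delta f x Q R"
  proof -
    have "transpose R ** matrix_inv (transpose R) = mat 1"
      using matrix_inv_props[OF transpose_invertible[OF Ri]] by simp
    then show ?thesis unfolding g_def model_grad_def
      by (simp add: matrix_vector_mul_assoc)
  qed
  have ei: "e $ i = f (x + column i D) - f x - inner (f' x) (column i D)" for i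
  proof -
    have "e $ i = (transpose R *v g) $ i - (transpose R *v (transpose Q *v f' x)) $ i"
      unfolding e_def h_def by (simp add: matrix_vector_mult_diff_distrib)
    also have "(transpose R *v g) $ i = f (x + Q *v column i R) - f x"
      unfolding Rg model_delta_def by simp
    also have "(transpose R *v (transpose Q *v f' x)) $ i = inner (column i R) (transpose Q *v f' x)"
      by (rule transpose_mv_nth)
    also have "\<dots> = inner (Q *v column i R) (f' x)" by (simp add: inner_mv)
    finally show ?thesis unfolding D column_mult by (simp add: inner_commute)
  qed
  have eb: "\<bar>e $ i\<bar> \<le> B" for i
  proof -
    have "\<bar>e $ i\<bar> \<le> L / 2 * (norm (column i D))\<^sup>2"
      unfolding ei by (rule taylor_bound[OF grad lip])
    also have "\<dots> \<le> B" unfolding B_def using L0 col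
      by (intro mult_left_mono power_mono) auto
    finally show ?thesis .
  qed
  have ne: "norm e \<le> sqrt (real CARD('p)) * B"
  proof -
    have "(norm e)\<^sup>2 = (\<Sum>i\<in>UNIV. (e $ i)\<^sup>2)" by (rule norm_sq_vec)
    also have "\<dots> \<le> (\<Sum>i\<in>(UNIV::'p set). B\<^sup>2)"
    proof (rule sum_mono)
      fix i :: 'p
      have "\<bar>e $ i\<bar>\<^sup>2 \<le> B\<^sup>2" using eb[of i] by (intro power_mono) auto
      then show "(e $ i)\<^sup>2 \<le> B\<^sup>2" by simp
    qed
    also have "\<dots> = (sqrt (real CARD('p)) * B)\<^sup>2" by (simp add: power_mult_distrib)
    finally have "(norm e)\<^sup>2 \<le> (sqrt (real CARD('p)) * B)\<^sup>2" .
    then show ?thesis by (rule power2_le_imp_le) (simp add: B0)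
  qed
  define v where "v = matrix_inv R *v h"
  have Rv: "R *v v = h" unfolding v_def using matrix_inv_props[OF Ri]
    by (simp add: matrix_vector_mul_assoc)
  have Dv: "norm (D *v v) = norm h" unfolding D
    by (simp add: matrix_vector_mul_assoc[symmetric] Rv iso_Q[OF QQ])
  have "(norm h)\<^sup>2 = inner (R *v v) h" by (simp add: Rv power2_norm_eq_inner)
  also have "\<dots> = inner v e" unfolding e_def by (rule inner_mv)
  also have "\<dots> \<le> norm v * norm e" by (rule Cauchy_Schwarz_ineq2[THEN order_trans[OF abs_ge_self]])
  finally have hh: "(norm h)\<^sup>2 \<le> norm v * norm e" .
  have key: "\<epsilon>rad * \<Delta> * norm h \<le> M * norm e"
  proof (cases "h = 0")
    case True then show ?thesis using M0 by simp
  next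
    case False
    then have hp: "0 < norm h" by simp
    have "\<epsilon>rad * \<Delta> * (norm h)\<^sup>2 \<le> \<epsilon>rad * \<Delta> * (norm v * norm e)"
      using hh er Dp by (intro mult_left_mono) auto
    also have "\<dots> = (\<epsilon>rad * \<Delta> * norm v) * norm e" by simp
    also have "\<dots> \<le> (M * norm h) * norm e"
      using lb[rule_format, of v] Dv by (intro mult_right_mono) auto
    finally have "(\<epsilon>rad * \<Delta> * norm h) * norm h \<le> (M * norm e) * norm h"
      by (simp add: power2_eq_square ac_simps)
    then show ?thesis using hp by simp
  qed
  have "\<epsilon>rad * \<Delta> * norm h \<le> \<epsilon>rad * \<Delta> * (sqrt (real CARD('p)) * M * (L/2) * \<epsilon>rad * \<Delta>)"
  proof -
    have "M * norm e \<le> M * (sqrt (real CARD('p)) * B)" using ne M0 by (intro mult_left_mono) auto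
    also have "\<dots> = \<epsilon>rad * \<Delta> * (sqrt (real CARD('p)) * M * (L/2) * \<epsilon>rad * \<Delta>)"
      unfolding B_def by (simp add: power2_eq_square ac_simps)
    finally show ?thesis using key by simp
  qed
  then have "norm h \<le> sqrt (real CARD('p)) * M * (L/2) * \<epsilon>rad * \<Delta>"
    using er Dp by (simp add: mult_le_cancel_left_pos)
  then show ?thesis unfolding h_def g_def .
qed


theorem mainTheorem6:
  fixes f :: "real^'n \<Rightarrow> real" and f' :: "real^'n \<Rightarrow> real^'n" and L :: real
    and C :: "(real^'n) set" and prand :: nat and x0 :: "real^'n"
    and \<Delta>0 \<Delta>min \<Delta>max \<gamma>dec \<eta>1 \<eta>2 \<mu> \<epsilon>rad \<epsilon>geo :: real and \<gamma>inc :: "nat \<Rightarrow> real"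
    and k :: nat and x :: "real^'n" and \<Delta> :: real and D :: "real^'p^'n"
  assumes grad: "\<And>y. (f has_derivative (\<lambda>h. inner (f' y) h)) (at y)"
    and lip: "L-lipschitz_on UNIV f'"
    and C: "closed C" "convex C" "interior C \<noteq> {}"
    and dims: "1 \<le> prand" "prand \<le> CARD('p)" "CARD('p) \<le> CARD('n)"
    and x0: "x0 \<in> C"
    and Delta0: "0 < \<Delta>0" "\<Delta>0 \<le> \<Delta>max"
    and Deltas: "0 < \<Delta>min" "\<Delta>min \<le> \<Delta>max"
    and gdec: "0 < \<gamma>dec" "\<gamma>dec < 1"
    and ginc: "\<And>j. 1 \<le> \<gamma>inc j"
    and etas: "0 < \<eta>1" "\<eta>1 \<le> \<eta>2" "\<eta>2 < 1"
    and mu: "0 < \<mu>"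
    and eps: "1 \<le> \<epsilon>rad" "0 < \<epsilon>geo"
    and iter: "clarsta_iter f C prand x0 \<Delta>0 \<Delta>min \<Delta>max \<gamma>dec \<gamma>inc \<eta>1 \<eta>2 \<mu> \<epsilon>rad \<epsilon>geo k x \<Delta> D"
  shows "0 < \<Delta> \<and> \<Delta> \<le> \<Delta>max \<and>
    (let p = real CARD('p);
         M = max (1 / \<epsilon>geo) (1 / \<Delta>min) * \<epsilon>rad * \<Delta>max;
         \<kappa>ef = (1/2 * L * (1 + sqrt p * M)) * \<epsilon>rad\<^sup>2;
         \<kappa>eg = (1/2 * L * (2 + sqrt p * M)) * \<epsilon>rad
     in \<forall>Q R. is_QR D Q R \<longrightarrow>
          (\<forall>sh \<in> proj_set Q C x. norm sh \<le> \<Delta> \<longrightarrow>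
             \<bar>f (x + Q *v sh) - model f x Q R sh\<bar> \<le> \<kappa>ef * \<Delta>\<^sup>2 \<and>
             (\<forall>d \<in> proj_set Q C x. norm d \<le> 1 \<longrightarrow>
                \<bar>inner (transpose Q *v f' (x + Q *v sh) - model_grad f x Q R) d\<bar> \<le> \<kappa>eg * \<Delta>)))"
proof -
  define M where "M = max (1 / \<epsilon>geo) (1 / \<Delta>min) * \<epsilon>rad * \<Delta>max"
  define p where "p = real CARD('p)"
  have inv: "0 < \<Delta> \<and> \<Delta> \<le> \<Delta>max \<and> (\<forall>j. norm (column j D) \<le> \<epsilon>rad * \<Delta>) \<and>
    (\<forall>v. \<epsilon>rad * \<Delta> * norm v \<le> M * norm (D *v v))"
    using invariant[OF iter Delta0(1) Delta0(2) Deltas(1) Deltas(2) gdec eps] unfolding M_def .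
  have M0: "0 \<le> M" unfolding M_def using eps Deltas
    by (intro mult_nonneg_nonneg) (auto simp: le_max_iff_disj)
  have L0: "0 \<le> L" using lip unfolding lipschitz_on_def by auto
  have Dp: "0 < \<Delta>" using inv by blast
  have p0: "0 \<le> sqrt p" unfolding p_def by simp
  define H where "H = sqrt p * M * (L/2) * \<epsilon>rad * \<Delta>"
  have H0: "0 \<le> H" unfolding H_def using p0 M0 L0 eps Dp by simp
  have per: "\<bar>f (x + Q *v sh) - model f x Q R sh\<bar> \<le> ((1/2 * L * (1 + sqrt p * M)) * \<epsilon>rad\<^sup>2) * \<Delta>\<^sup>2 \<and>
             (\<forall>d \<in> proj_set Q C x. norm d \<le> 1 \<longrightarrow>
                \<bar>inner (transpose Q *v f' (x + Q *v sh) - model_grad f x Q R) d\<bar> \<le> ((1/2 * L * (2 + sqrt p * M)) * \<epsilon>rad) * \<Delta>)"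
    if QR: "is_QR D Q R" and shn: "norm sh \<le> \<Delta>" for Q :: "real^'p^'n" and R :: "real^'p^'p" and sh :: "real^'p"
  proof -
    have QQ: "transpose Q ** Q = mat 1" using QR unfolding is_QR_def by auto
    define g where "g = model_grad f x Q R"
    define h where "h = g - transpose Q *v f' x"
    have hb: "norm h \<le> H"
      unfolding h_def g_def H_def p_def
      by (rule grad_err[OF grad lip QR]) (use inv M0 eps in auto)
    have c2: "inner (transpose Q *v w) d = inner w (Q *v d)" for w d
      using inner_mv[of Q d w] by (simp add: inner_commute)
    have iso: "norm (Q *v v) = norm v" for v by (rule iso_Q[OF QQ])
    have e1: "\<epsilon>rad \<le> \<epsilon>rad\<^sup>2" using eps by (simp add: power2_eq_square)
    have val: "\<bar>f (x + Q *v sh) - model f x Q R sh\<bar> \<le> ((1/2 * L * (1 + sqrt p * M)) * \<epsilon>rad\<^sup>2) * \<Delta>\<^sup>2"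
    proof -
      have eq: "f (x + Q *v sh) - model f x Q R sh =
          (f (x + Q *v sh) - f x - inner (f' x) (Q *v sh)) - inner h sh"
        unfolding h_def g_def by (simp add: model_def inner_diff_left c2 dot_lmul_matrix)
      have t1: "\<bar>f (x + Q *v sh) - f x - inner (f' x) (Q *v sh)\<bar> \<le> L / 2 * \<Delta>\<^sup>2"
      proof -
        have "\<bar>f (x + Q *v sh) - f x - inner (f' x) (Q *v sh)\<bar> \<le> L / 2 * (norm (Q *v sh))\<^sup>2"
          by (rule taylor_bound[OF grad lip])
        also have "\<dots> \<le> L / 2 * \<Delta>\<^sup>2" unfolding iso using L0 shn
          by (intro mult_left_mono power_mono) auto
        finally show ?thesis .
      qed
      have t2: "\<bar>inner h sh\<bar> \<le> H * \<Delta>"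
      proof -
        have "\<bar>inner h sh\<bar> \<le> norm h * norm sh" by (rule Cauchy_Schwarz_ineq2)
        also have "\<dots> \<le> H * \<Delta>" using hb shn H0 by (intro mult_mono) auto
        finally show ?thesis .
      qed
      have a1: "L / 2 * \<Delta>\<^sup>2 \<le> L / 2 * \<Delta>\<^sup>2 * \<epsilon>rad\<^sup>2"
      proof -
        have "1 \<le> \<epsilon>rad\<^sup>2" using eps e1 by linarith
        then have "L / 2 * \<Delta>\<^sup>2 * 1 \<le> L / 2 * \<Delta>\<^sup>2 * \<epsilon>rad\<^sup>2" using L0 by (intro mult_left_mono) auto
        then show ?thesis by simp
      qed
      have a2: "H * \<Delta> \<le> sqrt p * M * (L/2) * \<Delta>\<^sup>2 * \<epsilon>rad\<^sup>2"
      proof -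
        have "H * \<Delta> = (sqrt p * M * (L/2) * \<Delta>\<^sup>2) * \<epsilon>rad" unfolding H_def by (simp add: power2_eq_square ac_simps)
        also have "\<dots> \<le> (sqrt p * M * (L/2) * \<Delta>\<^sup>2) * \<epsilon>rad\<^sup>2"
          using e1 p0 M0 L0 by (intro mult_left_mono) auto
        finally show ?thesis .
      qed
      have a3: "((1/2 * L * (1 + sqrt p * M)) * \<epsilon>rad\<^sup>2) * \<Delta>\<^sup>2 = L / 2 * \<Delta>\<^sup>2 * \<epsilon>rad\<^sup>2 + sqrt p * M * (L/2) * \<Delta>\<^sup>2 * \<epsilon>rad\<^sup>2"
        by (simp add: algebra_simps)
      have "\<bar>f (x + Q *v sh) - model f x Q R sh\<bar> \<le> L / 2 * \<Delta>\<^sup>2 + H * \<Delta>"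
        unfolding eq using t1 t2 by linarith
      then show ?thesis unfolding a3 using a1 a2 by linarith
    qed
    have grd: "\<bar>inner (transpose Q *v f' (x + Q *v sh) - model_grad f x Q R) d\<bar> \<le> ((1/2 * L * (2 + sqrt p * M)) * \<epsilon>rad) * \<Delta>"
      if dn: "norm d \<le> 1" for d :: "real^'p"
    proof -
      have eq: "inner (transpose Q *v f' (x + Q *v sh) - model_grad f x Q R) d =
          inner (f' (x + Q *v sh) - f' x) (Q *v d) - inner h d"
        unfolding h_def g_def by (simp add: inner_diff_left c2 dot_lmul_matrix)
      have t1: "\<bar>inner (f' (x + Q *v sh) - f' x) (Q *v d)\<bar> \<le> L * \<Delta>"
      proof -
        have "\<bar>inner (f' (x + Q *v sh) - f' x) (Q *v d)\<bar> \<le> norm (f' (x + Q *v sh) - f' x) * norm (Q *v d)"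
          by (rule Cauchy_Schwarz_ineq2)
        also have "\<dots> \<le> (L * \<Delta>) * 1"
        proof (rule mult_mono)
          have "norm (f' (x + Q *v sh) - f' x) \<le> L * dist (x + Q *v sh) x"
          proof -
            have "\<forall>a b. norm (f' a - f' b) \<le> L * norm (a - b)"
              using lip unfolding lipschitz_on_def dist_norm by auto
            then have "norm (f' (x + Q *v sh) - f' x) \<le> L * norm ((x + Q *v sh) - x)" by blast
            then show ?thesis by (simp add: dist_norm)
          qed
          also have "\<dots> = L * norm sh" by (simp add: dist_norm iso)
          also have "\<dots> \<le> L * \<Delta>" using shn L0 by (rule mult_left_mono)
          finally show "norm (f' (x + Q *v sh) - f' x) \<le> L * \<Delta>" .
          show "norm (Q *v d) \<le> 1" using dn iso by simp
        qed (use L0 Dp in auto)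
        finally show ?thesis by simp
      qed
      have t2: "\<bar>inner h d\<bar> \<le> H"
      proof -
        have "\<bar>inner h d\<bar> \<le> norm h * norm d" by (rule Cauchy_Schwarz_ineq2)
        also have "\<dots> \<le> H * 1" using hb dn H0 by (intro mult_mono) auto
        finally show ?thesis by simp
      qed
      have a1: "L * \<Delta> \<le> L * \<Delta> * \<epsilon>rad"
      proof -
        have "L * \<Delta> * 1 \<le> L * \<Delta> * \<epsilon>rad" using L0 Dp eps by (intro mult_left_mono) auto
        then show ?thesis by simp
      qed
      have a3: "((1/2 * L * (2 + sqrt p * M)) * \<epsilon>rad) * \<Delta> = L * \<Delta> * \<epsilon>rad + H"
        unfolding H_def by (simp add: algebra_simps)
      have "\<bar>inner (transpose Q *v f' (x + Q *v sh) - model_grad f x Q R) d\<bar> \<le> L * \<Delta> + H"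
        unfolding eq using t1 t2 by linarith
      then show ?thesis unfolding a3 using a1 by linarith
    qed
    show ?thesis using val grd by blast
  qed
  have main: "\<forall>Q R. is_QR D Q R \<longrightarrow>
          (\<forall>sh \<in> proj_set Q C x. norm sh \<le> \<Delta> \<longrightarrow>
             \<bar>f (x + Q *v sh) - model f x Q R sh\<bar> \<le> ((1/2 * L * (1 + sqrt p * M)) * \<epsilon>rad\<^sup>2) * \<Delta>\<^sup>2 \<and>
             (\<forall>d \<in> proj_set Q C x. norm d \<le> 1 \<longrightarrow>
                \<bar>inner (transpose Q *v f' (x + Q *v sh) - model_grad f x Q R) d\<bar> \<le> ((1/2 * L * (2 + sqrt p * M)) * \<epsilon>rad) * \<Delta>))"
    using per by blast
  show ?thesis unfolding Let_def M_def[symmetric] p_def[symmetric] using inv main by blast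
qed

end
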